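(* The WKD-IBE construction described in the context is history-independent: for every pattern $S$ and any two well-formed keys $k_1$ (for pattern $P_1$) and $k_2$ (for pattern $P_2$) in the same system (same $\mathsf{Params}$ and $\alpha$) such that $P_1$ matches $S$ and $P_2$ matches $S$, the distributions $\{\mathbf{KeyDer}(k_1,S)\}$ and $\{\mathbf{KeyDer}(k_2,S)\}$ over the internal randomness of $\mathbf{KeyDer}$ are identical. Here, if $k_1$ (resp. $k_2$) is the master key, $P_1$ (resp. $P_2$) is the pattern with all slots equal to $\bot$.
   Context: Patterns: for a prime $p$ and integer $\ell$, a pattern is $S\in(\mathbb{Z}_p^*\cup\{\bot\})^\ell$; $\mathrm{fixed}(S)=\{(i,S(i)):S(i)\neq\bot\}$, $\mathrm{free}(S)=\{i:S(i)=\bot\}$; $P$ matches $S$ if for all $i$, $P(i)=\bot$ or $P(i)=S(i)$. Construction. Let $\mathbb{G}_1,\mathbb{G}_2,\mathbb{G}_T$ be cyclic groups of prime order $p$ with a bilinear map $e:\mathbb{G}_1\times\mathbb{G}_2\to\mathbb{G}_T$. $\mathbf{Setup}(1^\ell)$: choose $g\in\mathbb{G}_2$ and $g_2,g_3,h_1,\dots,h_\ell,h_s\in\mathbb{G}_1$ uniformly, $\alpha\in\mathbb{Z}_p$ uniformly, set $g_1=g^\alpha$; $\mathsf{Params}=(g,g_1,g_2,g_3,h_1,\dots,h_\ell,h_s)$ and $\mathsf{MasterKey}=g_2^\alpha$. Here $s$ is a special index, distinct from $1,\dots,\ell$, never fixed in a pattern. For a pattern $S$ write $Q_S=g_3\prod_{(i,a_i)\in\mathrm{fixed}(S)}h_i^{a_i}$.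 Non-master keys are triples $(k_0,k_1,B)$ with $k_0\in\mathbb{G}_1$, $k_1\in\mathbb{G}_2$, $B$ a set of pairs $(j,b_j)$ with $b_j\in\mathbb{G}_1$. $\mathbf{KeyDer}$ from the master key to pattern $S$: sample $r\in\mathbb{Z}_p$ uniformly and output $(g_2^\alpha Q_S^r,\ g^r,\ \{(j,h_j^r)\}_{j\in\mathrm{free}(S)\cup\{s\}})$. $\mathbf{KeyDer}$ from a key $(k_0,k_1,B)$, $B=\{(i,b_i)\}$, to pattern $S$: sample $t\in\mathbb{Z}_p$ uniformly and output $\big(k_0\,Q_S^t\prod_{(i,a_i)\in\mathrm{fixed}(S),\,(i,b_i)\in B}b_i^{a_i},\ g^t k_1,\ \{(j,h_j^t b_j)\}_{j\in\mathrm{free}(S)\cup\{s\}}\big)$. A non-master key for pattern $P$ is well-formed if it equals $(g_2^\alpha Q_P^{r_0},\ g^{r_0},\ \{(j,h_j^{r_0})\}_{j\in\mathrm{free}(P)\cup\{s\}})$ for some $r_0\in\mathbb{Z}_p$; the master key $g_2^\alpha$ is also regarded as well-formed. *)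

theory Defs
  imports "HOL-Algebra.Coset" "HOL-Algebra.FiniteProduct" "HOL-Probability.Probability_Mass_Function"
begin

text \<open>Indices of key components: the pattern slots (0-based) and the special index s.\<close>
datatype idx = Slot nat | Spec

text \<open>A pattern of length l: a list of l entries, None standing for the wildcard bot,
  Some a for a fixed value a in Z_p^* (represented by a natural number 0 < a < p).\<close>
type_synonym pattern = "nat option list"

definition is_pattern :: "nat \<Rightarrow> nat \<Rightarrow> pattern \<Rightarrow> bool" where
  "is_pattern p l S \<longleftrightarrow> length S = l \<and> (\<forall>i<length S. \<forall>a. S ! i = Some a \<longrightarrow> 0 < a \<and> a < p)"

definition fixed_idx :: "pattern \<Rightarrow> nat set" where
  "fixed_idx S = {i. i < length S \<and> S ! i \<noteq> None}"

definition free_set :: "pattern \<Rightarrow> idx set" where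
  "free_set S = {Slot i | i. i < length S \<and> S ! i = None}"

definition matches :: "pattern \<Rightarrow> pattern \<Rightarrow> bool" where
  "matches P S \<longleftrightarrow> length P = length S \<and> (\<forall>i<length P. P ! i = None \<or> P ! i = S ! i)"

record ('a, 'b) params =
  pg  :: 'b
  pg1 :: 'b
  pg2 :: 'a
  pg3 :: 'a
  ph  :: "idx \<Rightarrow> 'a"   \<comment> \<open>h_1..h_l at Slot 0..Slot (l-1), h_s at Spec\<close>

text \<open>Keys: the master key g2^alpha, or a triple (k0, k1, B) where B is a set of pairs
  (j, b_j), represented as a partial map from indices to group elements.\<close>
datatype ('a, 'b) key = Master 'a | Key 'a 'b "idx \<Rightarrow> 'a option"

definition QS :: "('a, 'c) monoid_scheme \<Rightarrow> ('a, 'b) params \<Rightarrow> pattern \<Rightarrow> 'a" where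
  "QS G1 prm S = pg3 prm \<otimes>\<^bsub>G1\<^esub>
     finprod G1 (\<lambda>i. ph prm (Slot i) [^]\<^bsub>G1\<^esub> the (S ! i)) (fixed_idx S)"

definition KeyDer ::
  "nat \<Rightarrow> ('a, 'c) monoid_scheme \<Rightarrow> ('b, 'd) monoid_scheme \<Rightarrow> ('a, 'b) params
     \<Rightarrow> ('a, 'b) key \<Rightarrow> pattern \<Rightarrow> ('a, 'b) key pmf" where
  "KeyDer p G1 G2 prm k S = (case k of
     Master m \<Rightarrow> map_pmf (\<lambda>r::nat.
        Key (m \<otimes>\<^bsub>G1\<^esub> (QS G1 prm S [^]\<^bsub>G1\<^esub> r))
            (pg prm [^]\<^bsub>G2\<^esub> r)
            (\<lambda>j. if j \<in> free_set S \<union> {Spec} then Some (ph prm j [^]\<^bsub>G1\<^esub> r) else None))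
        (pmf_of_set {..<p})
   | Key k0 k1 B \<Rightarrow> map_pmf (\<lambda>t::nat.
        Key (k0 \<otimes>\<^bsub>G1\<^esub> (QS G1 prm S [^]\<^bsub>G1\<^esub> t) \<otimes>\<^bsub>G1\<^esub>
               finprod G1 (\<lambda>i. the (B (Slot i)) [^]\<^bsub>G1\<^esub> the (S ! i))
                 {i \<in> fixed_idx S. B (Slot i) \<noteq> None})
            (pg prm [^]\<^bsub>G2\<^esub> t \<otimes>\<^bsub>G2\<^esub> k1)
            (\<lambda>j. if j \<in> free_set S \<union> {Spec}
                 then Some (ph prm j [^]\<^bsub>G1\<^esub> t \<otimes>\<^bsub>G1\<^esub> the (B j)) else None))
        (pmf_of_set {..<p}))"

definition well_formed ::
  "nat \<Rightarrow> ('a, 'c) monoid_scheme \<Rightarrow> ('b, 'd) monoid_scheme \<Rightarrow> ('a, 'b) params \<Rightarrow> nat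
     \<Rightarrow> ('a, 'b) key \<Rightarrow> pattern \<Rightarrow> bool" where
  "well_formed p G1 G2 prm \<alpha> k P \<longleftrightarrow>
     (k = Master (pg2 prm [^]\<^bsub>G1\<^esub> \<alpha>) \<and> (\<forall>i<length P. P ! i = None)) \<or>
     (\<exists>r0<p. k = Key (pg2 prm [^]\<^bsub>G1\<^esub> \<alpha> \<otimes>\<^bsub>G1\<^esub> (QS G1 prm P [^]\<^bsub>G1\<^esub> r0))
                     (pg prm [^]\<^bsub>G2\<^esub> r0)
                     (\<lambda>j. if j \<in> free_set P \<union> {Spec} then Some (ph prm j [^]\<^bsub>G1\<^esub> r0) else None))"

end

theory Submission imports Defs "HOL-Algebra.Multiplicative_Group"
begin

lemma prime_order_comm:
  assumes "group G" "finite (carrier G)" "Coset.order G = p" "prime p"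
  shows "comm_group G"
proof -
  interpret group G by fact
  have comm: "x \<otimes>\<^bsub>G\<^esub> y = y \<otimes>\<^bsub>G\<^esub> x" if x: "x \<in> carrier G" and y: "y \<in> carrier G" for x y
  proof (cases "x = \<one>\<^bsub>G\<^esub>")
    case True then show ?thesis using y by simp
  next
    case False
    have "ord x dvd p" using ord_dvd_group_order[OF x] assms by simp
    moreover have "ord x \<noteq> 1" using ord_eq_1[OF x] False by simp
    ultimately have op: "ord x = p" using assms(4) unfolding prime_nat_iff by auto
    have sub: "generate G {x} \<subseteq> carrier G" using x by (simp add: generate_incl)
    have "card (generate G {x}) = card (carrier G)"
      using generate_pow_card[OF x] op assms(3) unfolding Coset.order_def by simp
    hence "generate G {x} = carrier G" using sub assms(2) by (simp add: card_subset_eq)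
    hence "y \<in> generate G {x}" using y by simp
    then obtain k::nat where k: "y = x [^]\<^bsub>G\<^esub> k"
      using generate_pow_on_finite_carrier[OF assms(2) x] by auto
    show ?thesis unfolding k using x
      by (metis nat_pow_Suc nat_pow_Suc2)
  qed
  show ?thesis
    by (rule group.group_comm_groupI) (use comm in \<open>auto intro: is_group\<close>)
qed

lemma pow_mod_order:
  fixes G (structure)
  assumes "group G" "finite (carrier G)" "Coset.order G = p" "x \<in> carrier G"
  shows "x [^]\<^bsub>G\<^esub> (n::nat) = x [^]\<^bsub>G\<^esub> (n mod p)"
proof -
  interpret group G by fact
  have "x [^] n = x [^] (p * (n div p) + n mod p)" by simp
  also have "\<dots> = (x [^] p) [^] (n div p) \<otimes> x [^] (n mod p)"
    using assms(4) by (simp add: nat_pow_mult nat_pow_pow)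
  also have "\<dots> = x [^] (n mod p)"
    using pow_order_eq_1[OF assms(4)] assms(3,4) by simp
  finally show ?thesis .
qed

lemma aux: "(a::nat) < p \<Longrightarrow> b < p \<Longrightarrow> a \<le> b \<Longrightarrow> (a + r0) mod p = (b + r0) mod p \<Longrightarrow> a = b"
proof -
  assume h: "a < p" "b < p" "a \<le> b" "(a + r0) mod p = (b + r0) mod p"
  have "p dvd (b + r0) - (a + r0)" using h(3,4) mod_eq_dvd_iff_nat[of "a + r0" "b + r0" p] by simp
  hence d: "p dvd b - a" by simp
  show "a = b"
  proof (rule ccontr)
    assume "a \<noteq> b" hence "b - a > 0" using h by simp
    hence "p \<le> b - a" using d by (simp add: dvd_imp_le)
    thus False using h by simp
  qed
qed

lemma shift_uniform:
  assumes "(p::nat) > 0"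
  shows "map_pmf (\<lambda>t. (t + r0) mod p) (pmf_of_set {..<p}) = pmf_of_set {..<p}"
proof -
  have inj: "inj_on (\<lambda>t. (t + r0) mod p) {..<p}"
  proof
    fix a b assume "a \<in> {..<p}" "b \<in> {..<p}" "(a + r0) mod p = (b + r0) mod p"
    thus "a = b" by (metis aux nle_le lessThan_iff)
  qed
  have "(\<lambda>t. (t + r0) mod p) ` {..<p} \<subseteq> {..<p}" using assms by auto
  hence img: "(\<lambda>t. (t + r0) mod p) ` {..<p} = {..<p}"
    using inj by (simp add: card_image card_subset_eq)
  show ?thesis using map_pmf_of_set_inj[OF inj] assms img by auto
qed

lemma (in comm_monoid) finprod_pow:
  assumes "finite A" "f \<in> A \<rightarrow> carrier G"
  shows "finprod G (\<lambda>i. f i [^] (n::nat)) A = finprod G f A [^] n"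
  using assms
proof (induction A rule: finite_induct)
  case empty then show ?case by simp
next
  case (insert a A)
  then have fa: "f a \<in> carrier G" and fA: "f \<in> A \<rightarrow> carrier G" by auto
  have "finprod G (\<lambda>i. f i [^] n) (insert a A) = f a [^] n \<otimes> finprod G (\<lambda>i. f i [^] n) A"
    using insert fa fA by (subst finprod_insert) auto
  also have "\<dots> = f a [^] n \<otimes> finprod G f A [^] n" using insert fA by simp
  also have "\<dots> = (f a \<otimes> finprod G f A) [^] n"
    using fa fA by (simp add: pow_mult_distrib m_comm)
  also have "\<dots> = finprod G f (insert a A) [^] n"
    using insert fa fA by (subst finprod_insert) auto
  finally show ?case .
qed

lemma fixed_finite: "finite (fixed_idx S)"
  unfolding fixed_idx_def by simp

lemma QS_combine:
  fixes G1 (structure)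
  assumes cg: "comm_group G1" and h: "\<And>j. ph prm j \<in> carrier G1" and g3: "pg3 prm \<in> carrier G1"
    and m: "matches P S"
  shows "QS G1 prm P [^] (r0::nat) \<otimes> finprod G1 (\<lambda>i. (ph prm (Slot i) [^] r0) [^] the (S!i)) (fixed_idx S - fixed_idx P)
         = QS G1 prm S [^] r0"
proof -
  interpret comm_group G1 by fact
  define f where "f = (\<lambda>i. ph prm (Slot i) [^] the (S!i))"
  have fc: "f \<in> A \<rightarrow> carrier G1" for A using h unfolding f_def by auto
  have sub: "fixed_idx P \<subseteq> fixed_idx S" using m unfolding matches_def fixed_idx_def by auto
  have eqP: "finprod G1 (\<lambda>i. ph prm (Slot i) [^] the (P!i)) (fixed_idx P) = finprod G1 f (fixed_idx P)"
    by (rule finprod_cong) (use m h in \<open>auto simp: f_def matches_def fixed_idx_def simp_implies_def\<close>)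
  have un: "fixed_idx S = fixed_idx P \<union> (fixed_idx S - fixed_idx P)" using sub by auto
  have split: "finprod G1 f (fixed_idx S) = finprod G1 f (fixed_idx P) \<otimes> finprod G1 f (fixed_idx S - fixed_idx P)"
    by (subst un, rule finprod_Un_disjoint) (auto simp: fixed_finite fc)
  have pw: "finprod G1 (\<lambda>i. (ph prm (Slot i) [^] r0) [^] the (S!i)) (fixed_idx S - fixed_idx P)
      = finprod G1 f (fixed_idx S - fixed_idx P) [^] r0"
  proof -
    have "finprod G1 (\<lambda>i. (ph prm (Slot i) [^] r0) [^] the (S!i)) (fixed_idx S - fixed_idx P)
        = finprod G1 (\<lambda>i. f i [^] r0) (fixed_idx S - fixed_idx P)"
      by (rule finprod_cong) (use h in \<open>auto simp: f_def nat_pow_pow mult.commute simp_implies_def\<close>)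
    also have "\<dots> = finprod G1 f (fixed_idx S - fixed_idx P) [^] r0"
      by (rule finprod_pow) (auto simp: fixed_finite fc)
    finally show ?thesis .
  qed
  have c1: "finprod G1 f A \<in> carrier G1" for A by (simp add: fc)
  have qs: "QS G1 prm S = pg3 prm \<otimes> finprod G1 f (fixed_idx S)" "QS G1 prm P = pg3 prm \<otimes> finprod G1 f (fixed_idx P)"
    unfolding QS_def eqP f_def by simp_all
  have "(pg3 prm \<otimes> finprod G1 f (fixed_idx P)) [^] r0 \<otimes> finprod G1 f (fixed_idx S - fixed_idx P) [^] r0
      = (pg3 prm \<otimes> (finprod G1 f (fixed_idx P) \<otimes> finprod G1 f (fixed_idx S - fixed_idx P))) [^] r0"
    using g3 c1 by (simp add: pow_mult_distrib m_ac)
  then show ?thesis unfolding qs pw split by simp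
qed

definition Fk :: "('a, 'c) monoid_scheme \<Rightarrow> ('b, 'd) monoid_scheme \<Rightarrow> ('a, 'b) params \<Rightarrow> nat \<Rightarrow> pattern \<Rightarrow> nat \<Rightarrow> ('a, 'b) key" where
  "Fk G1 G2 prm \<alpha> S r = Key (pg2 prm [^]\<^bsub>G1\<^esub> \<alpha> \<otimes>\<^bsub>G1\<^esub> (QS G1 prm S [^]\<^bsub>G1\<^esub> r))
            (pg prm [^]\<^bsub>G2\<^esub> r)
            (\<lambda>j. if j \<in> free_set S \<union> {Spec} then Some (ph prm j [^]\<^bsub>G1\<^esub> r) else None)"

lemma free_sub: "matches P S \<Longrightarrow> free_set S \<subseteq> free_set P"
  unfolding matches_def free_set_def by auto

lemma keyder_master:
  "KeyDer p G1 G2 prm (Master (pg2 prm [^]\<^bsub>G1\<^esub> \<alpha>)) S = map_pmf (Fk G1 G2 prm \<alpha> S) (pmf_of_set {..<p})"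
  unfolding KeyDer_def Fk_def by simp

lemma keyder_key:
  fixes G1 :: "('a, 'c) monoid_scheme" and G2 :: "('b, 'd) monoid_scheme" and r0 p :: nat
  assumes cg: "comm_group G1" and g2g: "group G2"
    and f1: "finite (carrier G1)" and o1: "Coset.order G1 = p"
    and f2: "finite (carrier G2)" and o2: "Coset.order G2 = p" and pp: "p > 0"
    and gc: "pg prm \<in> carrier G2"
    and g2c: "pg2 prm \<in> carrier G1" and g3c: "pg3 prm \<in> carrier G1"
    and hc: "\<And>j. ph prm j \<in> carrier G1"
    and m: "matches P S"
  shows "KeyDer p G1 G2 prm (Key (pg2 prm [^]\<^bsub>G1\<^esub> \<alpha> \<otimes>\<^bsub>G1\<^esub> (QS G1 prm P [^]\<^bsub>G1\<^esub> r0))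
                     (pg prm [^]\<^bsub>G2\<^esub> r0)
                     (\<lambda>j. if j \<in> free_set P \<union> {Spec} then Some (ph prm j [^]\<^bsub>G1\<^esub> r0) else None)) S
       = map_pmf (Fk G1 G2 prm \<alpha> S) (pmf_of_set {..<p})"
proof -
  interpret G1: comm_group G1 by fact
  interpret G2: group G2 by fact
  define B where "B = (\<lambda>j. if j \<in> free_set P \<union> {Spec} then Some (ph prm j [^]\<^bsub>G1\<^esub> r0) else None)"
  have qc: "QS G1 prm X \<in> carrier G1" for X
    unfolding QS_def using g3c hc by (auto intro!: G1.finprod_closed)
  have setq: "{i \<in> fixed_idx S. B (Slot i) \<noteq> None} = fixed_idx S - fixed_idx P"
    using m unfolding B_def fixed_idx_def free_set_def matches_def by auto
  define X where "X = finprod G1 (\<lambda>i. (ph prm (Slot i) [^]\<^bsub>G1\<^esub> r0) [^]\<^bsub>G1\<^esub> the (S!i)) (fixed_idx S - fixed_idx P)"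
  have Xc: "X \<in> carrier G1" unfolding X_def using hc by (auto intro!: G1.finprod_closed G1.nat_pow_closed hc)
  have prodB: "finprod G1 (\<lambda>i. the (B (Slot i)) [^]\<^bsub>G1\<^esub> the (S ! i)) {i \<in> fixed_idx S. B (Slot i) \<noteq> None} = X"
    unfolding setq X_def
    by (rule G1.finprod_cong) (use hc m in \<open>auto simp: B_def fixed_idx_def free_set_def matches_def simp_implies_def\<close>)
  have comb: "QS G1 prm P [^]\<^bsub>G1\<^esub> r0 \<otimes>\<^bsub>G1\<^esub> X = QS G1 prm S [^]\<^bsub>G1\<^esub> r0"
    unfolding X_def by (rule QS_combine[OF cg hc g3c m])
  have pt: "Key (pg2 prm [^]\<^bsub>G1\<^esub> \<alpha> \<otimes>\<^bsub>G1\<^esub> (QS G1 prm P [^]\<^bsub>G1\<^esub> r0) \<otimes>\<^bsub>G1\<^esub> (QS G1 prm S [^]\<^bsub>G1\<^esub> t) \<otimes>\<^bsub>G1\<^esub>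
               finprod G1 (\<lambda>i. the (B (Slot i)) [^]\<^bsub>G1\<^esub> the (S ! i))
                 {i \<in> fixed_idx S. B (Slot i) \<noteq> None})
            (pg prm [^]\<^bsub>G2\<^esub> t \<otimes>\<^bsub>G2\<^esub> pg prm [^]\<^bsub>G2\<^esub> r0)
            (\<lambda>j. if j \<in> free_set S \<union> {Spec}
                 then Some (ph prm j [^]\<^bsub>G1\<^esub> t \<otimes>\<^bsub>G1\<^esub> the (B j)) else None)
     = Fk G1 G2 prm \<alpha> S ((t + r0) mod p)" for t
  proof -
    have e1: "pg2 prm [^]\<^bsub>G1\<^esub> \<alpha> \<otimes>\<^bsub>G1\<^esub> (QS G1 prm P [^]\<^bsub>G1\<^esub> r0) \<otimes>\<^bsub>G1\<^esub> (QS G1 prm S [^]\<^bsub>G1\<^esub> t) \<otimes>\<^bsub>G1\<^esub> X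
        = pg2 prm [^]\<^bsub>G1\<^esub> \<alpha> \<otimes>\<^bsub>G1\<^esub> (QS G1 prm S [^]\<^bsub>G1\<^esub> ((t + r0) mod p))"
    proof -
      have "pg2 prm [^]\<^bsub>G1\<^esub> \<alpha> \<otimes>\<^bsub>G1\<^esub> (QS G1 prm P [^]\<^bsub>G1\<^esub> r0) \<otimes>\<^bsub>G1\<^esub> (QS G1 prm S [^]\<^bsub>G1\<^esub> t) \<otimes>\<^bsub>G1\<^esub> X
          = pg2 prm [^]\<^bsub>G1\<^esub> \<alpha> \<otimes>\<^bsub>G1\<^esub> ((QS G1 prm P [^]\<^bsub>G1\<^esub> r0 \<otimes>\<^bsub>G1\<^esub> X) \<otimes>\<^bsub>G1\<^esub> (QS G1 prm S [^]\<^bsub>G1\<^esub> t))"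
        using g2c qc Xc by (simp add: G1.m_ac)
      also have "\<dots> = pg2 prm [^]\<^bsub>G1\<^esub> \<alpha> \<otimes>\<^bsub>G1\<^esub> (QS G1 prm S [^]\<^bsub>G1\<^esub> (t + r0))"
        unfolding comb using qc by (simp add: G1.nat_pow_mult add.commute)
      also have "\<dots> = pg2 prm [^]\<^bsub>G1\<^esub> \<alpha> \<otimes>\<^bsub>G1\<^esub> (QS G1 prm S [^]\<^bsub>G1\<^esub> ((t + r0) mod p))"
        using pow_mod_order[OF G1.is_group f1 o1 qc] by metis
      finally show ?thesis .
    qed
    have e2: "pg prm [^]\<^bsub>G2\<^esub> t \<otimes>\<^bsub>G2\<^esub> pg prm [^]\<^bsub>G2\<^esub> r0 = pg prm [^]\<^bsub>G2\<^esub> ((t + r0) mod p)"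
      using gc pow_mod_order[OF g2g f2 o2 gc] by (simp add: G2.nat_pow_mult)
    have e3: "(\<lambda>j. if j \<in> free_set S \<union> {Spec}
                 then Some (ph prm j [^]\<^bsub>G1\<^esub> t \<otimes>\<^bsub>G1\<^esub> the (B j)) else None)
        = (\<lambda>j. if j \<in> free_set S \<union> {Spec} then Some (ph prm j [^]\<^bsub>G1\<^esub> ((t + r0) mod p)) else None)"
    proof
      fix j
      show "(if j \<in> free_set S \<union> {Spec} then Some (ph prm j [^]\<^bsub>G1\<^esub> t \<otimes>\<^bsub>G1\<^esub> the (B j)) else None)
         = (if j \<in> free_set S \<union> {Spec} then Some (ph prm j [^]\<^bsub>G1\<^esub> ((t + r0) mod p)) else None)"
        using free_sub[OF m] hc[of j] pow_mod_order[OF G1.is_group f1 o1 hc[of j], of "t + r0"]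
        by (auto simp: B_def G1.nat_pow_mult)
    qed
    show ?thesis unfolding prodB e1 e2 e3 Fk_def ..
  qed
  have "KeyDer p G1 G2 prm (Key (pg2 prm [^]\<^bsub>G1\<^esub> \<alpha> \<otimes>\<^bsub>G1\<^esub> (QS G1 prm P [^]\<^bsub>G1\<^esub> r0))
                     (pg prm [^]\<^bsub>G2\<^esub> r0) B) S
      = map_pmf (\<lambda>t. Fk G1 G2 prm \<alpha> S ((t + r0) mod p)) (pmf_of_set {..<p})"
    unfolding KeyDer_def key.case pt ..
  also have "\<dots> = map_pmf (Fk G1 G2 prm \<alpha> S) (map_pmf (\<lambda>t. (t + r0) mod p) (pmf_of_set {..<p}))"
    by (simp add: pmf.map_comp o_def)
  also have "\<dots> = map_pmf (Fk G1 G2 prm \<alpha> S) (pmf_of_set {..<p})"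
    using shift_uniform[OF pp] by simp
  finally show ?thesis unfolding B_def .
qed

lemma keyder_wf:
  fixes G1 :: "('a, 'c) monoid_scheme" and G2 :: "('b, 'd) monoid_scheme" and p \<alpha> :: nat
  assumes cg: "comm_group G1" and g2g: "group G2"
    and f1: "finite (carrier G1)" and o1: "Coset.order G1 = p"
    and f2: "finite (carrier G2)" and o2: "Coset.order G2 = p" and pp: "p > 0"
    and gc: "pg prm \<in> carrier G2"
    and g2c: "pg2 prm \<in> carrier G1" and g3c: "pg3 prm \<in> carrier G1"
    and hc: "\<And>j. ph prm j \<in> carrier G1"
    and m: "matches P S" and wf: "well_formed p G1 G2 prm \<alpha> k P"
  shows "KeyDer p G1 G2 prm k S = map_pmf (Fk G1 G2 prm \<alpha> S) (pmf_of_set {..<p})"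
  using wf unfolding well_formed_def
proof (elim disjE exE conjE)
  assume "k = Master (pg2 prm [^]\<^bsub>G1\<^esub> \<alpha>)"
  then show ?thesis by (simp add: keyder_master)
next
  fix r0 assume "r0 < p" and k: "k = Key (pg2 prm [^]\<^bsub>G1\<^esub> \<alpha> \<otimes>\<^bsub>G1\<^esub> (QS G1 prm P [^]\<^bsub>G1\<^esub> r0))
                     (pg prm [^]\<^bsub>G2\<^esub> r0)
                     (\<lambda>j. if j \<in> free_set P \<union> {Spec} then Some (ph prm j [^]\<^bsub>G1\<^esub> r0) else None)"
  show ?thesis unfolding k by (rule keyder_key[OF assms(1-12)])
qed

theorem theorem3:
  fixes G1 :: "('a, 'c) monoid_scheme" and G2 :: "('b, 'd) monoid_scheme"
    and prm :: "('a, 'b) params" and p l \<alpha> :: nat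
    and S P1 P2 :: pattern and k1 k2 :: "('a, 'b) key"
  assumes "prime p"
    and "group G1" and "group G2"
    and "finite (carrier G1)" and "Coset.order G1 = p"
    and "finite (carrier G2)" and "Coset.order G2 = p"
    and "pg prm \<in> carrier G2"
    and "pg2 prm \<in> carrier G1" and "pg3 prm \<in> carrier G1"
    and "\<And>j. ph prm j \<in> carrier G1"
    and "\<alpha> < p"
    and "pg1 prm = pg prm [^]\<^bsub>G2\<^esub> \<alpha>"
    and "is_pattern p l S" and "is_pattern p l P1" and "is_pattern p l P2"
    and "matches P1 S" and "matches P2 S"
    and "well_formed p G1 G2 prm \<alpha> k1 P1"
    and "well_formed p G1 G2 prm \<alpha> k2 P2"
  shows "KeyDer p G1 G2 prm k1 S = KeyDer p G1 G2 prm k2 S"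
proof -
  have cg: "comm_group G1" using prime_order_comm[OF assms(2,4,5,1)] .
  have pp: "p > 0" using assms(1) prime_gt_0_nat by blast
  show ?thesis
    using keyder_wf[OF cg assms(3,4,5,6,7) pp assms(8,9,10,11,17,19)]
          keyder_wf[OF cg assms(3,4,5,6,7) pp assms(8,9,10,11,18,20)] by simp
qed

end
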